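(* Let $I$ be a compact Hausdorff space and $f_i:\mathbb{R}^m\to\mathbb{R}$, $i\in I$, convex functions such that $i\mapsto f_i(x)$ is continuous on $I$ for each $x$; set $F(i,x):=f_i(x)$, $f(x):=\max_{i\in I}f_i(x)$, $I_f(x):=\{i\in I: f_i(x)=f(x)\}$. Let $\bar x\in\mathbb{R}^m$ with $f(\bar x)=0$. Then the following are equivalent: (i) $\min_{\|h\|=1}f'(\bar x,h)\neq0$; (ii) there exist constants $c,\varepsilon>0$ such that whenever $G\in C(I\times\mathbb{R}^m,\mathbb{R})$ is such that each $g_i:=G(i,\cdot)$ is convex, and, with $g(x):=\max_{i\in I}g_i(x)$ and $I_g(x):=\{i\in I:g_i(x)=g(x)\}$, one has: $g(\bar x)=0$; $I_g(\bar x)\subseteq I_f(\bar x)$ if $\min_{\|h\|=1}f'(\bar x,h)<0$; $I_f(\bar x)\subseteq I_g(\bar x)$ if $\min_{\|h\|=1}f'(\bar x,h)>0$; and $$\limsup_{x\to\bar x}\frac{|f_i(x)-g_i(x)-(f_i(\bar x)-g_i(\bar x))|}{\|x-\bar x\|}\le\varepsilon\quad\text{for all } i\in I_f(\bar x)\cap I_g(\bar x),$$ then $\tau_{\min}(G,\bar x)\le c$; (iii) there exist constants $c,\varepsilon>0$ such that for all $u^*\in\mathbb{R}^m$ with $\|u^*\|\le1$, one has $\tau_{\min}(G,\bar x)\le c$, where $G\in C(I\times\mathbb{R}^m,\mathbb{R})$ is defined by $G(i,x):=f_i(x)+\varepsilon\langle u^*,x-\bar x\rangle$.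
   Context: $\mathbb{R}^m$ carries the Euclidean norm, $B(\bar x,\delta)$ is the closed ball of radius $\delta$ around $\bar x$, $d(x,D)=\inf\{\|x-y\|:y\in D\}$ (with $\inf\emptyset=+\infty$). For a convex $\varphi$, $\varphi'(x,h):=\lim_{t\to0^+}\frac{\varphi(x+th)-\varphi(x)}{t}$. For $G\in C(I\times\mathbb{R}^m,\mathbb{R})$ with $g_i:=G(i,\cdot)$ convex and $g:=\max_{i\in I}g_i$, the solution set is $S_G:=\{x: g_i(x)\le0\ \forall i\in I\}$ and the local error bound modulus at $\bar x$ is $\tau_{\min}(G,\bar x):=\inf\{\tau>0:\exists\delta>0\text{ with } d(x,S_G)\le\tau[g(x)]_+\ \forall x\in B(\bar x,\delta)\}$, where $[t]_+=\max\{t,0\}$ and $\inf\emptyset=+\infty$. *)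

theory Defs
  imports "HOL-Analysis.Analysis"
begin

definition dirderiv :: "('a::real_normed_vector \<Rightarrow> real) \<Rightarrow> 'a \<Rightarrow> 'a \<Rightarrow> real" where
  "dirderiv \<phi> x h = Lim (at_right (0::real)) (\<lambda>t. (\<phi> (x + t *\<^sub>R h) - \<phi> x) / t)"

definition fmax :: "('i \<Rightarrow> 'a \<Rightarrow> real) \<Rightarrow> 'a \<Rightarrow> real" where
  "fmax F x = (SUP i. F i x)"

definition active :: "('i \<Rightarrow> 'a \<Rightarrow> real) \<Rightarrow> 'a \<Rightarrow> 'i set" where
  "active F x = {i. F i x = fmax F x}"

definition mindir :: "('i \<Rightarrow> 'a::real_normed_vector \<Rightarrow> real) \<Rightarrow> 'a \<Rightarrow> real" where
  "mindir F x = Inf {dirderiv (fmax F) x h | h. norm h = 1}"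

definition solset :: "('i \<Rightarrow> 'a \<Rightarrow> real) \<Rightarrow> 'a set" where
  "solset G = {x. \<forall>i. G i x \<le> 0}"

definition edist :: "'a::metric_space \<Rightarrow> 'a set \<Rightarrow> ereal" where
  "edist x D = (if D = {} then \<infinity> else ereal (infdist x D))"

text \<open>Local error bound modulus, with inf of the empty set = +infinity.\<close>
definition tau_min :: "('i \<Rightarrow> 'a::metric_space \<Rightarrow> real) \<Rightarrow> 'a \<Rightarrow> ereal" where
  "tau_min G xb = Inf {ereal \<tau> | \<tau>. \<tau> > 0 \<and> (\<exists>\<delta>>0. \<forall>x\<in>cball xb \<delta>.
        edist x (solset G) \<le> ereal (\<tau> * max (fmax G x) 0))}"

end

theory Submission
  imports Defs
begin

lemma fmax_bdd:
  fixes H :: "'i::topological_space \<Rightarrow> 'a \<Rightarrow> real"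
  assumes "compact (UNIV :: 'i set)" "continuous_on UNIV (\<lambda>i. H i x)"
  shows "bdd_above (range (\<lambda>i. H i x))" "bdd_below (range (\<lambda>i. H i x))"
proof -
  have "compact ((\<lambda>i. H i x) ` UNIV)" using assms compact_continuous_image by blast
  then have "bounded ((\<lambda>i. H i x) ` UNIV)" by (rule compact_imp_bounded)
  then show "bdd_above (range (\<lambda>i. H i x))" "bdd_below (range (\<lambda>i. H i x))"
    by (auto intro: bounded_imp_bdd_above bounded_imp_bdd_below)
qed

lemma fmax_ge:
  fixes H :: "'i::topological_space \<Rightarrow> 'a \<Rightarrow> real"
  assumes "compact (UNIV :: 'i set)" "continuous_on UNIV (\<lambda>i. H i x)"
  shows "H i x \<le> fmax H x"
  unfolding fmax_def using fmax_bdd[of H x, OF assms] by (intro cSUP_upper) auto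

lemma fmax_le:
  fixes H :: "'i \<Rightarrow> 'a \<Rightarrow> real"
  assumes "\<And>i. H i x \<le> c"
  shows "fmax H x \<le> c"
  unfolding fmax_def using assms by (intro cSUP_least) auto

lemma fmax_attain:
  fixes H :: "'i::topological_space \<Rightarrow> 'a \<Rightarrow> real"
  assumes "compact (UNIV :: 'i set)" "continuous_on UNIV (\<lambda>i. H i x)"
  shows "\<exists>i. H i x = fmax H x"
proof -
  obtain i where i: "\<forall>j. H j x \<le> H i x"
    using continuous_attains_sup[OF assms(1) _ assms(2)] by auto
  have "fmax H x \<le> H i x" using i by (intro fmax_le) auto
  then show ?thesis using fmax_ge[of H x, OF assms, of i] by (intro exI[of _ i]) auto
qed

lemma fmax_convex:
  fixes H :: "'i::topological_space \<Rightarrow> 'a::real_vector \<Rightarrow> real"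
  assumes "compact (UNIV :: 'i set)" "\<And>x. continuous_on UNIV (\<lambda>i. H i x)"
    "\<And>i. convex_on UNIV (H i)"
  shows "convex_on UNIV (fmax H)"
proof (rule convex_onI[OF _ convex_UNIV])
  fix t x y assume t': "0 < t" "t < (1::real)"
  then have t: "0 \<le> t" "t \<le> (1::real)" by auto
  show "fmax H ((1 - t) *\<^sub>R x + t *\<^sub>R y) \<le> (1 - t) * fmax H x + t * fmax H y"
  proof (rule fmax_le)
    fix i
    have "H i ((1 - t) *\<^sub>R x + t *\<^sub>R y) \<le> (1 - t) * H i x + t * H i y"
      using convex_onD[OF assms(3)] t by auto
    also have "\<dots> \<le> (1 - t) * fmax H x + t * fmax H y"
      using fmax_ge[of H, OF assms(1,2)] t by (intro add_mono mult_left_mono) auto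
    finally show "H i ((1 - t) *\<^sub>R x + t *\<^sub>R y) \<le> (1 - t) * fmax H x + t * fmax H y" .
  qed
qed

lemma fmax_cont:
  fixes H :: "'i::topological_space \<Rightarrow> 'a::euclidean_space \<Rightarrow> real"
  assumes "compact (UNIV :: 'i set)" "\<And>x. continuous_on UNIV (\<lambda>i. H i x)"
    "\<And>i. convex_on UNIV (H i)"
  shows "continuous_on UNIV (fmax H)"
  by (rule convex_on_continuous[OF open_UNIV fmax_convex[OF assms]])

definition dq :: "('a::real_normed_vector \<Rightarrow> real) \<Rightarrow> 'a \<Rightarrow> 'a \<Rightarrow> real \<Rightarrow> real" where
  "dq \<phi> x h t = (\<phi> (x + t *\<^sub>R h) - \<phi> x) / t"

definition DD :: "('a::real_normed_vector \<Rightarrow> real) \<Rightarrow> 'a \<Rightarrow> 'a \<Rightarrow> real" where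
  "DD \<phi> x h = Inf (dq \<phi> x h ` {0<..})"

lemma convex_interp:
  fixes \<phi> :: "'a::real_normed_vector \<Rightarrow> real"
  assumes "convex_on UNIV \<phi>" "0 < s" "s \<le> t"
  shows "\<phi> (x + s *\<^sub>R h) \<le> (1 - s/t) * \<phi> x + (s/t) * \<phi> (x + t *\<^sub>R h)"
proof -
  have eq: "(1 - s/t) *\<^sub>R x + (s/t) *\<^sub>R (x + t *\<^sub>R h) = x + s *\<^sub>R h"
    using assms by (simp add: algebra_simps)
  show ?thesis
    using convex_onD[OF assms(1), of "s/t" x "x + t *\<^sub>R h"] assms eq by auto
qed

lemma dq_mono:
  fixes \<phi> :: "'a::real_normed_vector \<Rightarrow> real"
  assumes "convex_on UNIV \<phi>" "0 < s" "s \<le> t"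
  shows "dq \<phi> x h s \<le> dq \<phi> x h t"
proof -
  have "\<phi> (x + s *\<^sub>R h) - \<phi> x \<le> (s/t) * (\<phi> (x + t *\<^sub>R h) - \<phi> x)"
    using convex_interp[OF assms, of x h] by (simp add: algebra_simps)
  then have "(\<phi> (x + s *\<^sub>R h) - \<phi> x) / s \<le> (\<phi> (x + t *\<^sub>R h) - \<phi> x) / t"
    using assms by (simp add: divide_simps mult.commute)
  then show ?thesis unfolding dq_def .
qed

lemma dq_lower:
  fixes \<phi> :: "'a::real_normed_vector \<Rightarrow> real"
  assumes "convex_on UNIV \<phi>" "0 < t"
  shows "\<phi> x - \<phi> (x - h) \<le> dq \<phi> x h t"
proof -
  define \<theta> where "\<theta> = 1 / (1 + t)"
  have th: "0 \<le> \<theta>" "\<theta> \<le> 1" using assms by (auto simp: \<theta>_def)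
  have eq: "(1 - \<theta>) *\<^sub>R (x - h) + \<theta> *\<^sub>R (x + t *\<^sub>R h) = x"
  proof -
    have "(1 - \<theta>) *\<^sub>R (x - h) + \<theta> *\<^sub>R (x + t *\<^sub>R h) = x + (\<theta> * t - (1 - \<theta>)) *\<^sub>R h"
      by (simp add: algebra_simps)
    also have "\<theta> * t - (1 - \<theta>) = 0" using assms by (simp add: \<theta>_def field_simps)
    finally show ?thesis by simp
  qed
  have "\<phi> x \<le> (1 - \<theta>) * \<phi> (x - h) + \<theta> * \<phi> (x + t *\<^sub>R h)"
    using convex_onD[OF assms(1) th, of "x - h" "x + t *\<^sub>R h"] eq by auto
  then have "(1 + t) * \<phi> x \<le> (1 + t) * ((1 - \<theta>) * \<phi> (x - h) + \<theta> * \<phi> (x + t *\<^sub>R h))"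
    using assms by (intro mult_left_mono) auto
  also have "\<dots> = ((1 + t) * (1 - \<theta>)) * \<phi> (x - h) + ((1 + t) * \<theta>) * \<phi> (x + t *\<^sub>R h)"
    by (simp add: algebra_simps)
  also have "(1 + t) * (1 - \<theta>) = t" using assms by (simp add: \<theta>_def field_simps)
  also have "(1 + t) * \<theta> = 1" using assms by (simp add: \<theta>_def field_simps)
  finally have "(1 + t) * \<phi> x \<le> t * \<phi> (x - h) + \<phi> (x + t *\<^sub>R h)" by simp
  then have "t * (\<phi> x - \<phi> (x - h)) \<le> \<phi> (x + t *\<^sub>R h) - \<phi> x"
    by (simp add: algebra_simps)
  then show ?thesis using assms unfolding dq_def by (simp add: field_simps)
qed

lemma DD_bdd:
  fixes \<phi> :: "'a::real_normed_vector \<Rightarrow> real"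
  assumes "convex_on UNIV \<phi>"
  shows "bdd_below (dq \<phi> x h ` {0<..})"
  using dq_lower[OF assms] by (intro bdd_belowI[of _ "\<phi> x - \<phi> (x - h)"]) auto

lemma DD_le:
  fixes \<phi> :: "'a::real_normed_vector \<Rightarrow> real"
  assumes "convex_on UNIV \<phi>" "0 < t"
  shows "DD \<phi> x h \<le> dq \<phi> x h t"
  unfolding DD_def using assms DD_bdd[OF assms(1)] by (intro cInf_lower) auto

lemma DD_ge:
  fixes \<phi> :: "'a::real_normed_vector \<Rightarrow> real"
  assumes "convex_on UNIV \<phi>"
  shows "\<phi> x - \<phi> (x - h) \<le> DD \<phi> x h"
  unfolding DD_def using dq_lower[OF assms] by (intro cInf_greatest) auto

lemma DD_less:
  fixes \<phi> :: "'a::real_normed_vector \<Rightarrow> real"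
  assumes "convex_on UNIV \<phi>" "DD \<phi> x h < a"
  shows "\<exists>t>0. \<forall>s. 0 < s \<and> s \<le> t \<longrightarrow> dq \<phi> x h s < a"
proof -
  obtain y where "y \<in> dq \<phi> x h ` {0<..}" "y < a"
    using cInf_lessD[of "dq \<phi> x h ` {0<..}" a] assms unfolding DD_def by auto
  then obtain t where t: "t > 0" "dq \<phi> x h t < a" by auto
  show ?thesis using t by (intro exI[of _ t]) (meson le_less_trans dq_mono[OF assms(1)])
qed

lemma dirderiv_DD:
  fixes \<phi> :: "'a::real_normed_vector \<Rightarrow> real"
  assumes "convex_on UNIV \<phi>"
  shows "dirderiv \<phi> x h = DD \<phi> x h"
proof -
  have "((\<lambda>t. (\<phi> (x + t *\<^sub>R h) - \<phi> x) / t) \<longlongrightarrow> DD \<phi> x h) (at_right 0)"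
  proof (rule order_tendstoI)
    fix a assume "a < DD \<phi> x h"
    then show "\<forall>\<^sub>F t in at_right 0. a < (\<phi> (x + t *\<^sub>R h) - \<phi> x) / t"
      using DD_le[OF assms] unfolding eventually_at_right_field dq_def
      by (intro exI[of _ 1]) (auto intro: less_le_trans)
  next
    fix a assume "DD \<phi> x h < a"
    then obtain t where t: "t > 0" "\<forall>s. 0 < s \<and> s \<le> t \<longrightarrow> dq \<phi> x h s < a"
      using DD_less[OF assms] by blast
    then show "\<forall>\<^sub>F t in at_right 0. (\<phi> (x + t *\<^sub>R h) - \<phi> x) / t < a"
      unfolding eventually_at_right_field dq_def
      by (intro exI[of _ t]) auto
  qed
  then show ?thesis unfolding dirderiv_def
    by (intro tendsto_Lim) auto
qed

lemma L1:
  fixes H :: "'i::topological_space \<Rightarrow> 'a::real_normed_vector \<Rightarrow> real"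
  assumes cpt: "compact (UNIV::'i set)" and cont: "\<And>x. continuous_on UNIV (\<lambda>i. H i x)"
    and cvx: "\<And>i. convex_on UNIV (H i)"
    and le0: "\<And>i. H i xb \<le> 0"
    and act: "\<And>i. H i xb = 0 \<Longrightarrow> \<exists>s>0. H i (xb + s *\<^sub>R h) < c * s"
  shows "\<exists>s0>0. \<forall>s j. 0 < s \<and> s \<le> s0 \<longrightarrow> H j (xb + s *\<^sub>R h) \<le> c * s"
proof -
  have loc: "\<exists>U s. open U \<and> i \<in> U \<and> s > 0 \<and>
      (\<forall>j\<in>U. \<forall>s'. 0 < s' \<and> s' \<le> s \<longrightarrow> H j (xb + s' *\<^sub>R h) \<le> c * s')" for i
  proof (cases "H i xb = 0")
    case True
    obtain s where s: "s > 0" "H i (xb + s *\<^sub>R h) < c * s" using act True by blast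
    let ?U = "{j. H j (xb + s *\<^sub>R h) < c * s}"
    have "open ?U" using open_Collect_less[OF cont continuous_on_const] .
    moreover have "\<forall>j\<in>?U. \<forall>s'. 0 < s' \<and> s' \<le> s \<longrightarrow> H j (xb + s' *\<^sub>R h) \<le> c * s'"
    proof (intro ballI allI impI)
      fix j s' assume j: "j \<in> ?U" and s': "0 < s' \<and> s' \<le> s"
      have "H j (xb + s' *\<^sub>R h) \<le> (1 - s'/s) * H j xb + (s'/s) * H j (xb + s *\<^sub>R h)"
        using convex_interp[OF cvx] s' by auto
      also have "(1 - s'/s) * H j xb \<le> 0"
        using s' le0[of j] by (intro mult_nonneg_nonpos) auto
      also have "(s'/s) * H j (xb + s *\<^sub>R h) \<le> (s'/s) * (c * s)"
        using j s' s by (intro mult_left_mono) auto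
      also have "(s'/s) * (c * s) = c * s'" using s by simp
      finally show "H j (xb + s' *\<^sub>R h) \<le> c * s'" by simp
    qed
    ultimately show ?thesis using s by (intro exI[of _ ?U] exI[of _ s]) auto
  next
    case False
    define a where "a = H i xb"
    define b where "b = H i (xb + h)"
    have a: "a < 0" using False le0[of i] by (auto simp: a_def)
    define K where "K = \<bar>b + 1 - a/2 - c\<bar> + 1"
    define s where "s = min 1 ((- a/2) / K)"
    have K: "K > 0" by (simp add: K_def add_nonneg_pos)
    have spos: "s > 0" using a K by (simp add: s_def divide_neg_pos)
    let ?U = "{j. H j xb < a/2} \<inter> {j. H j (xb + h) < b + 1}"
    have "open ?U"
      using open_Collect_less[OF cont continuous_on_const] open_Collect_less[OF cont continuous_on_const]
      by (intro open_Int)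
    moreover have "\<forall>j\<in>?U. \<forall>s'. 0 < s' \<and> s' \<le> s \<longrightarrow> H j (xb + s' *\<^sub>R h) \<le> c * s'"
    proof (intro ballI allI impI)
      fix j s' assume j: "j \<in> ?U" and s': "0 < s' \<and> s' \<le> s"
      have s'1: "s' \<le> 1" using s' by (simp add: s_def)
      have "H j (xb + s' *\<^sub>R h) \<le> (1 - s'/1) * H j xb + (s'/1) * H j (xb + 1 *\<^sub>R h)"
        using convex_interp[OF cvx, of s' 1] s' s'1 by blast
      also have "\<dots> = (1 - s') * H j xb + s' * H j (xb + h)" by simp
      also have "(1 - s') * H j xb \<le> (1 - s') * (a/2)"
        using j s'1 by (intro mult_left_mono) auto
      also have "s' * H j (xb + h) \<le> s' * (b + 1)"
        using j s' by (intro mult_left_mono) auto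
      also have "(1 - s') * (a / 2) + s' * (b + 1) = a/2 + s' * (b + 1 - a/2 - c) + c * s'"
        by (simp add: field_simps)
      also have "s' * (b + 1 - a/2 - c) \<le> s' * K"
        using s' by (intro mult_left_mono) (auto simp: K_def)
      also have "s' * K \<le> ((- a/2) / K) * K"
        using s' K by (intro mult_right_mono) (auto simp: s_def)
      also have "((- a/2) / K) * K = - a/2" using K by simp
      finally show "H j (xb + s' *\<^sub>R h) \<le> c * s'" by simp
    qed
    moreover have "i \<in> ?U" using a by (auto simp: a_def b_def)
    ultimately show ?thesis using spos by (intro exI[of _ ?U] exI[of _ s]) blast
  qed
  then obtain U S where US: "\<And>i. open (U i) \<and> i \<in> U i \<and> S i > 0 \<and>
      (\<forall>j\<in>U i. \<forall>s'. 0 < s' \<and> s' \<le> S i \<longrightarrow> H j (xb + s' *\<^sub>R h) \<le> c * s')"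
    by metis
  have o: "\<And>T. T \<in> UNIV \<Longrightarrow> open (U T)" using US by blast
  have cov: "UNIV \<subseteq> (\<Union>c\<in>UNIV. U c)" using US by blast
  obtain C where C0: "C \<subseteq> UNIV" and C: "finite C" "UNIV \<subseteq> (\<Union>i\<in>C. U i)"
    by (rule compactE_image[OF cpt o cov])
  have Cne: "C \<noteq> {}" using C(2) by auto
  define s0 where "s0 = Min (S ` C)"
  have s0: "s0 > 0" using C Cne US by (simp add: s0_def)
  show ?thesis
  proof (intro exI[of _ s0] conjI s0 allI impI)
    fix s j assume s: "0 < s \<and> s \<le> s0"
    obtain i where i: "i \<in> C" "j \<in> U i" using C(2) by blast
    have "s0 \<le> S i" using i C by (simp add: s0_def)
    then show "H j (xb + s *\<^sub>R h) \<le> c * s" using US[of i] i s by auto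
  qed
qed

lemma equi_lip:
  fixes F :: "'i::topological_space \<Rightarrow> 'a::euclidean_space \<Rightarrow> real"
  assumes cpt: "compact (UNIV::'i set)" and cont: "\<And>x. continuous_on UNIV (\<lambda>i. F i x)"
    and cvx: "\<And>i. convex_on UNIV (F i)"
  shows "\<exists>L>0. \<forall>j y z. y \<in> cball x0 1 \<longrightarrow> z \<in> cball x0 1 \<longrightarrow> \<bar>F j z - F j y\<bar> \<le> L * dist z y"
proof -
  have fc: "continuous_on UNIV (fmax F)" by (rule fmax_cont[OF cpt cont cvx])
  have "compact (fmax F ` cball x0 2)"
    using compact_continuous_image[OF continuous_on_subset[OF fc] compact_cball] by blast
  then have "bdd_above (fmax F ` cball x0 2)" by (intro bounded_imp_bdd_above compact_imp_bounded)
  then obtain M1 where M1: "\<And>y. y \<in> cball x0 2 \<Longrightarrow> fmax F y \<le> M1"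
    unfolding bdd_above_def by blast
  obtain m0 where m0: "\<And>j. m0 \<le> F j x0"
    using fmax_bdd(2)[of F x0, OF cpt cont] unfolding bdd_below_def by auto
  define B where "B = \<bar>M1\<bar> + \<bar>2 * m0 - M1\<bar>"
  have bound: "\<bar>F j y\<bar> \<le> B" if y: "y \<in> cball x0 2" for j y
  proof -
    have up: "F j y \<le> M1" using M1[OF y] fmax_ge[of F y, OF cpt cont, of j] by linarith
    have y2: "2 *\<^sub>R x0 - y \<in> cball x0 2"
    proof -
      have "x0 - (2 *\<^sub>R x0 - y) = y - x0" by (simp add: scaleR_2 algebra_simps)
      then have "dist x0 (2 *\<^sub>R x0 - y) = dist x0 y" unfolding dist_norm by (metis norm_minus_commute)
      then show ?thesis using y by simp
    qed
    have "F j ((1 - 1/2) *\<^sub>R y + (1/2) *\<^sub>R (2 *\<^sub>R x0 - y)) \<le> (1 - 1/2) * F j y + (1/2) * F j (2 *\<^sub>R x0 - y)"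
      using convex_onD[OF cvx, of "1/2" y "2 *\<^sub>R x0 - y" j] by auto
    moreover have "(1 - 1/2) *\<^sub>R y + (1/2) *\<^sub>R (2 *\<^sub>R x0 - y) = x0" by (simp add: algebra_simps)
    ultimately have "F j x0 \<le> (1/2) * F j y + (1/2) * F j (2 *\<^sub>R x0 - y)" by simp
    moreover have "F j (2 *\<^sub>R x0 - y) \<le> M1"
      using M1[OF y2] fmax_ge[of F "2 *\<^sub>R x0 - y", OF cpt cont, of j] by linarith
    ultimately have "2 * m0 - M1 \<le> F j y" using m0[of j] by linarith
    then show ?thesis using up unfolding B_def by linarith
  qed
  have B0: "B \<ge> 0" unfolding B_def by simp
  have onedir: "F j z - F j y \<le> 2 * B * dist z y" if yz: "y \<in> cball x0 1" "z \<in> cball x0 1" for j y z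
  proof (cases "z = y")
    case True then show ?thesis by simp
  next
    case False
    define d where "d = dist z y"
    have d: "d > 0" using False by (simp add: d_def)
    define h where "h = (1/d) *\<^sub>R (z - y)"
    have zy: "y + d *\<^sub>R h = z" using d by (simp add: h_def)
    have nh: "norm h = 1" using d by (simp add: h_def d_def dist_norm)
    have w: "y + (d + 1) *\<^sub>R h \<in> cball x0 2"
    proof -
      have "y + (d + 1) *\<^sub>R h = z + h" using zy by (simp add: algebra_simps)
      moreover have "dist x0 (z + h) \<le> dist x0 z + norm h"
        using dist_triangle[of x0 "z + h" z] by (simp add: dist_norm)
      ultimately show ?thesis using yz nh by auto
    qed
    have "dq (F j) y h d \<le> dq (F j) y h (d + 1)" using dq_mono[OF cvx d] by simp
    then have "(F j z - F j y) / d \<le> (F j (y + (d + 1) *\<^sub>R h) - F j y) / (d + 1)"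
      unfolding dq_def zy .
    also have "\<dots> \<le> 2 * B / (d + 1)"
      using bound[OF w, of j] bound[of y j] yz d by (intro divide_right_mono) auto
    also have "\<dots> \<le> 2 * B" using B0 d by (simp add: field_simps)
    finally have "(F j z - F j y) / d \<le> 2 * B" .
    then show ?thesis using d unfolding d_def[symmetric] by (simp add: field_simps mult.commute)
  qed
  show ?thesis
  proof (intro exI[of _ "2 * B + 1"] conjI allI impI)
    show "2 * B + 1 > 0" using B0 by simp
    fix j y z assume yz: "y \<in> cball x0 1" "z \<in> cball x0 1"
    have "F j z - F j y \<le> (2 * B + 1) * dist z y"
      using onedir[OF yz, of j] mult_right_mono[of "2 * B" "2 * B + 1" "dist z y"] by simp
    moreover have "F j y - F j z \<le> (2 * B + 1) * dist z y"
      using onedir[OF yz(2,1), of j] mult_right_mono[of "2 * B" "2 * B + 1" "dist z y"] by (simp add: dist_commute)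
    ultimately show "\<bar>F j z - F j y\<bar> \<le> (2 * B + 1) * dist z y" by linarith
  qed
qed

lemma joint_cont:
  fixes F :: "'i::t2_space \<Rightarrow> 'a::euclidean_space \<Rightarrow> real"
  assumes cpt: "compact (UNIV::'i set)" and cont: "\<And>x. continuous_on UNIV (\<lambda>i. F i x)"
    and cvx: "\<And>i. convex_on UNIV (F i)"
  shows "continuous_on UNIV (\<lambda>(i, x). F i x)"
proof (rule continuous_on_eq_continuous_at[OF open_UNIV, THEN iffD2], intro ballI)
  fix p :: "'i \<times> 'a" 
  obtain i0 x0 where p: "p = (i0, x0)" by (cases p)
  obtain L where L: "L > 0" "\<And>j y z. y \<in> cball x0 1 \<Longrightarrow> z \<in> cball x0 1 \<Longrightarrow> \<bar>F j z - F j y\<bar> \<le> L * dist z y"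
    using equi_lip[OF cpt cont cvx, of x0] by blast
  have t1': "((\<lambda>q. snd q) \<longlongrightarrow> snd p) (at p)" by (intro tendsto_snd tendsto_ident_at)
  then have t1: "((\<lambda>q. snd q) \<longlongrightarrow> x0) (at p)" unfolding p by simp
  have t2': "((\<lambda>q. fst q) \<longlongrightarrow> fst p) (at p)" by (intro tendsto_fst tendsto_ident_at)
  then have t2'': "((\<lambda>q. fst q) \<longlongrightarrow> i0) (at p)" unfolding p by simp
  have t2: "((\<lambda>q. F (fst q) x0) \<longlongrightarrow> F i0 x0) (at p)"
    by (rule continuous_on_tendsto_compose[OF cont[of x0] t2'']) auto
  have "((\<lambda>(i, x). F i x) \<longlongrightarrow> F i0 x0) (at p)"
  proof (rule tendstoI)
    fix e :: real assume e: "e > 0"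
    have ev1: "eventually (\<lambda>q. dist (snd q) x0 < min 1 (e / (2 * L))) (at p)"
      using tendstoD[OF t1, of "min 1 (e / (2 * L))"] e L by auto
    have ev2: "eventually (\<lambda>q. dist (F (fst q) x0) (F i0 x0) < e / 2) (at p)"
      using tendstoD[OF t2, of "e / 2"] e by auto
    show "eventually (\<lambda>q. dist ((\<lambda>(i, x). F i x) q) (F i0 x0) < e) (at p)"
      using ev1 ev2
    proof eventually_elim
      case (elim q)
      obtain j y where q: "q = (j, y)" by (cases q)
      have y: "y \<in> cball x0 1" using elim(1) q by (simp add: dist_commute)
      have "\<bar>F j y - F j x0\<bar> \<le> L * dist y x0" using L(2)[OF _ y, of x0 j] by simp
      also have "\<dots> < L * (e / (2 * L))" using elim(1) q L by (intro mult_strict_left_mono) auto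
      also have "\<dots> = e / 2" using L by simp
      finally have "\<bar>F j y - F j x0\<bar> < e / 2" .
      moreover have "\<bar>F j x0 - F i0 x0\<bar> < e / 2" using elim(2) q by (simp add: dist_real_def)
      ultimately have "\<bar>F j y - F i0 x0\<bar> < e" by linarith
      then show ?case using q by (simp add: dist_real_def)
    qed
  qed
  then show "isCont (\<lambda>(i, x). F i x) p" unfolding isCont_def p by simp
qed

lemma cont_slice:
  fixes G :: "'i::topological_space \<Rightarrow> 'a::topological_space \<Rightarrow> real"
  assumes "continuous_on UNIV (\<lambda>(i, x). G i x)"
  shows "continuous_on UNIV (\<lambda>i. G i x)"
proof -
  have "continuous_on UNIV ((\<lambda>(i, x). G i x) \<circ> (\<lambda>i. (i, x)))"
    by (rule continuous_on_compose[OF _ continuous_on_subset[OF assms]]) (auto intro: continuous_intros)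
  then show ?thesis by (simp add: o_def)
qed

lemma fmax_shift:
  fixes F :: "'i::topological_space \<Rightarrow> 'a \<Rightarrow> real"
  assumes "compact (UNIV :: 'i set)" "continuous_on UNIV (\<lambda>i. F i x)"
  shows "fmax (\<lambda>i y. F i y + k y) x = fmax F x + k x"
proof (rule antisym)
  show "fmax (\<lambda>i y. F i y + k y) x \<le> fmax F x + k x"
    using fmax_ge[of F x, OF assms] by (intro fmax_le) auto
  have c2: "continuous_on UNIV (\<lambda>i. F i x + k x)" using assms(2) by (intro continuous_intros)
  have "fmax F x \<le> fmax (\<lambda>i y. F i y + k y) x - k x"
    using fmax_ge[of "\<lambda>i y. F i y + k y" x, OF assms(1) c2] by (intro fmax_le) (smt (verit))
  then show "fmax F x + k x \<le> fmax (\<lambda>i y. F i y + k y) x" by simp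
qed

lemma infdist_ge_lemma:
  fixes x :: "'a::metric_space"
  assumes "A \<noteq> {}" "\<And>y. y \<in> A \<Longrightarrow> d \<le> dist x y"
  shows "d \<le> infdist x A"
  unfolding infdist_notempty[OF assms(1)] using assms by (intro cINF_greatest) auto

lemma limsup_extract:
  fixes F G :: "'i \<Rightarrow> 'a::real_normed_vector \<Rightarrow> real"
  assumes "Limsup (at xb) (\<lambda>x. ereal (\<bar>F i x - G i x - (F i xb - G i xb)\<bar> / norm (x - xb))) \<le> ereal \<epsilon>"
    and "F i xb = 0" "G i xb = 0" "\<epsilon> < e"
  shows "\<exists>d>0. \<forall>y. y \<noteq> xb \<and> dist y xb < d \<longrightarrow> \<bar>F i y - G i y\<bar> < e * norm (y - xb)"
proof -
  have "ereal e > Limsup (at xb) (\<lambda>x. ereal (\<bar>F i x - G i x - (F i xb - G i xb)\<bar> / norm (x - xb)))"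
  proof -
    have "ereal \<epsilon> < ereal e" using assms(4) by simp
    then show ?thesis using assms(1) by (rule le_less_trans[rotated])
  qed
  from Limsup_lessD[OF this]
  have "eventually (\<lambda>x. \<bar>F i x - G i x\<bar> / norm (x - xb) < e) (at xb)"
    using assms(2,3) by simp
  then obtain d where d: "d > 0" "\<forall>y. y \<noteq> xb \<and> dist y xb < d \<longrightarrow> \<bar>F i y - G i y\<bar> / norm (y - xb) < e"
    unfolding eventually_at by auto
  show ?thesis
  proof (intro exI[of _ d] conjI d(1) allI impI)
    fix y assume y: "y \<noteq> xb \<and> dist y xb < d"
    then have "norm (y - xb) > 0" by simp
    then show "\<bar>F i y - G i y\<bar> < e * norm (y - xb)" using d(2) y by (simp add: divide_less_eq)
  qed
qed

lemma fmax_convex_cont: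
  fixes F :: "'i::topological_space \<Rightarrow> 'a::euclidean_space \<Rightarrow> real"
  assumes cpt: "compact (UNIV::'i set)" and cont: "\<And>x. continuous_on UNIV (\<lambda>i. F i x)"
    and cvx: "\<And>i. convex_on UNIV (F i)"
  shows "\<forall>h. norm h = 1 \<longrightarrow> mindir F xb \<le> DD (fmax F) xb h"
    and "\<And>a. mindir F xb < a \<Longrightarrow> \<exists>h. norm h = 1 \<and> DD (fmax F) xb h < a"
proof -
  let ?f = "fmax F"
  have fcvx: "convex_on UNIV ?f" by (rule fmax_convex[OF cpt cont cvx])
  have fc: "continuous_on UNIV ?f" by (rule fmax_cont[OF cpt cont cvx])
  have eq: "{dirderiv ?f xb h | h. norm h = 1} = (\<lambda>h. DD ?f xb h) ` {h. norm h = 1}"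
    using dirderiv_DD[OF fcvx] by auto
  have "compact (?f ` cball xb 1)"
    using compact_continuous_image[OF continuous_on_subset[OF fc] compact_cball] by blast
  then have "bdd_above (?f ` cball xb 1)" by (intro bounded_imp_bdd_above compact_imp_bounded)
  then obtain M where M: "\<And>y. y \<in> cball xb 1 \<Longrightarrow> ?f y \<le> M"
    unfolding bdd_above_def by blast
  have bdd: "bdd_below ((\<lambda>h. DD ?f xb h) ` {h. norm h = 1})"
  proof (rule bdd_belowI[of _ "?f xb - M"])
    fix z assume "z \<in> (\<lambda>h. DD ?f xb h) ` {h. norm h = 1}"
    then obtain h where h: "norm h = 1" "z = DD ?f xb h" by auto
    have "xb - h \<in> cball xb 1" using h by (simp add: dist_norm)
    then show "?f xb - M \<le> z" using DD_ge[OF fcvx, of xb h] M h by fastforce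
  qed
  obtain b :: 'a where b: "norm b = 1" using norm_Basis SOME_Basis by blast
  have ne: "(\<lambda>h. DD ?f xb h) ` {h. norm h = 1} \<noteq> {}" using b by auto
  show "\<forall>h. norm h = 1 \<longrightarrow> mindir F xb \<le> DD (fmax F) xb h"
  proof (intro allI impI)
    fix h :: 'a assume "norm h = 1"
    then have "DD ?f xb h \<in> (\<lambda>h. DD ?f xb h) ` {h. norm h = 1}" by blast
    then show "mindir F xb \<le> DD (fmax F) xb h"
      unfolding mindir_def eq using bdd by (rule cInf_lower)
  qed
  fix a assume "mindir F xb < a"
  then have "Inf ((\<lambda>h. DD ?f xb h) ` {h. norm h = 1}) < a" unfolding mindir_def eq .
  from cInf_lessD[OF ne this] obtain z where "z \<in> (\<lambda>h. DD ?f xb h) ` {h. norm h = 1}" "z < a"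
    by blast
  then show "\<exists>h. norm h = 1 \<and> DD (fmax F) xb h < a" by blast
qed

lemma partC:
  fixes F :: "'i::t2_space \<Rightarrow> 'a::euclidean_space \<Rightarrow> real" and xb :: 'a
  assumes cpt: "compact (UNIV :: 'i set)"
    and cvx: "\<And>i. convex_on UNIV (F i)"
    and cont: "\<And>x. continuous_on UNIV (\<lambda>i. F i x)"
    and f0: "fmax F xb = 0"
    and m0: "mindir F xb = 0"
    and c: "c > 0" and e: "\<epsilon> > 0"
  shows "\<exists>u::'a. norm u \<le> 1 \<and> \<not> tau_min (\<lambda>i x. F i x + \<epsilon> * inner u (x - xb)) xb \<le> ereal c"
proof -
  let ?f = "fmax F"
  have fcvx: "convex_on UNIV ?f" by (rule fmax_convex[OF cpt cont cvx])
  note mp = fmax_convex_cont[OF cpt cont cvx, of xb]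
  define \<eta> where "\<eta> = 1 / (4 * c)"
  define lm where "lm = min 1 (1 / (4 * c * \<epsilon>))"
  have eta: "\<eta> > 0" using c by (simp add: \<eta>_def)
  have lam: "lm > 0" "lm \<le> 1" "\<epsilon> * lm \<le> 1 / (4 * c)"
    using c e by (auto simp: lm_def min_def field_simps)
  obtain h where h: "norm h = 1" "DD ?f xb h < \<eta>" using mp(2)[of \<eta>] m0 eta by auto
  obtain t0 where t0: "t0 > 0" "\<And>s. 0 < s \<Longrightarrow> s \<le> t0 \<Longrightarrow> dq ?f xb h s < \<eta>"
    using DD_less[OF fcvx h(2)] by blast
  have fnn: "?f y \<ge> 0" for y
  proof (cases "y = xb")
    case True then show ?thesis using f0 by simp
  next
    case False
    define t where "t = norm (y - xb)"
    define h' where "h' = (1 / t) *\<^sub>R (y - xb)"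
    have t: "t > 0" using False by (simp add: t_def)
    have y: "xb + t *\<^sub>R h' = y" using t by (simp add: h'_def)
    have "norm h' = 1" using t by (simp add: h'_def t_def)
    then have "0 \<le> DD ?f xb h'" using mp(1) m0 by auto
    also have "\<dots> \<le> dq ?f xb h' t" by (rule DD_le[OF fcvx t])
    finally show ?thesis using t f0 y by (simp add: dq_def divide_nonneg_pos zero_le_divide_iff)
  qed
  define u where "u = lm *\<^sub>R h"
  define G where "G = (\<lambda>i x. F i x + \<epsilon> * inner u (x - xb))"
  have fG: "fmax G x = ?f x + \<epsilon> * inner u (x - xb)" for x
    unfolding G_def by (rule fmax_shift[OF cpt cont])
  let ?S = "solset G"
  have xbS: "xb \<in> ?S" unfolding solset_def G_def using fmax_ge[of F xb, OF cpt cont] f0 by auto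
  have Sne: "?S \<noteq> {}" using xbS by auto
  have hS: "inner h (y - xb) \<le> 0" if y: "y \<in> ?S" for y
  proof -
    have "fmax G y \<le> 0" using y unfolding solset_def by (intro fmax_le) auto
    then have "\<epsilon> * lm * inner h (y - xb) \<le> - ?f y" unfolding fG u_def by (simp add: algebra_simps)
    also have "\<dots> \<le> 0" using fnn by simp
    finally show ?thesis using e lam by (simp add: mult_le_0_iff)
  qed
  have lower: "ereal (2 * c) \<le> a" if a: "a \<in> {ereal \<tau> | \<tau>. \<tau> > 0 \<and> (\<exists>\<delta>>0. \<forall>x\<in>cball xb \<delta>.
        edist x (solset G) \<le> ereal (\<tau> * max (fmax G x) 0))}" for a
  proof -
    obtain \<tau> \<delta> where a: "a = ereal \<tau>" "\<tau> > 0" "\<delta> > 0"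
      and tb: "\<forall>x\<in>cball xb \<delta>. edist x (solset G) \<le> ereal (\<tau> * max (fmax G x) 0)"
      using a by auto
    define s where "s = min \<delta> t0"
    have s: "s > 0" "s \<le> t0" "s \<le> \<delta>" using a t0 by (auto simp: s_def)
    define x where "x = xb + s *\<^sub>R h"
    have xin: "x \<in> cball xb \<delta>" using s h by (simp add: x_def dist_norm)
    have "?f x < \<eta> * s" using t0(2)[OF s(1,2)] f0 s by (simp add: dq_def x_def divide_less_eq mult.commute)
    moreover have "inner u (x - xb) = lm * s" using h by (simp add: u_def x_def inner_commute dot_square_norm power2_eq_square)
    ultimately have "fmax G x < \<eta> * s + \<epsilon> * lm * s" unfolding fG by simp
    also have "\<dots> \<le> s / (2 * c)"
    proof -
      have "\<eta> * s + \<epsilon> * lm * s = (\<eta> + \<epsilon> * lm) * s" by (simp add: algebra_simps)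
      also have "\<dots> \<le> (1 / (2 * c)) * s"
        using lam(3) s c by (intro mult_right_mono) (auto simp: \<eta>_def field_simps)
      finally show ?thesis by simp
    qed
    finally have gx: "max (fmax G x) 0 \<le> s / (2 * c)" using s c by simp
    have "s \<le> infdist x ?S"
    proof (rule infdist_ge_lemma[OF Sne])
      fix y assume y: "y \<in> ?S"
      have "s = inner h (x - xb)" using h by (simp add: x_def dot_square_norm power2_eq_square)
      also have "\<dots> \<le> inner h (x - xb) - inner h (y - xb)" using hS[OF y] by simp
      also have "\<dots> = inner h (x - y)" by (simp add: inner_diff_right)
      also have "\<dots> \<le> norm h * norm (x - y)" by (rule norm_cauchy_schwarz)
      finally show "s \<le> dist x y" using h by (simp add: dist_norm)
    qed
    have "ereal (infdist x ?S) \<le> ereal (\<tau> * max (fmax G x) 0)"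
      using tb xin Sne unfolding edist_def by auto
    then have "infdist x ?S \<le> \<tau> * max (fmax G x) 0" by simp
    also have "\<dots> \<le> \<tau> * (s / (2 * c))" using gx a(2) by (intro mult_left_mono) auto
    finally have "s \<le> \<tau> * (s / (2 * c))" using \<open>s \<le> infdist x ?S\<close> by linarith
    then have "2 * c \<le> \<tau>" using s c by (simp add: field_simps)
    then show ?thesis using a by simp
  qed
  have "ereal (2 * c) \<le> tau_min G xb" unfolding tau_min_def using lower by (intro Inf_greatest) blast
  have lt: "ereal c < ereal (2 * c)" using c by simp
  have "\<not> tau_min G xb \<le> ereal c"
  proof
    assume "tau_min G xb \<le> ereal c"
    from order.trans[OF \<open>ereal (2 * c) \<le> tau_min G xb\<close> this] lt show False by simp
  qed
  then show ?thesis using lam by (intro exI[of _ u]) (auto simp: u_def G_def h)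
qed


lemma affine_convex:
  fixes u xb :: "'a::real_inner"
  shows "convex_on UNIV (\<lambda>x. e * inner u (x - xb))"
proof (rule convex_onI[OF _ convex_UNIV])
  fix t :: real and x y :: 'a
  have "(1 - t) *\<^sub>R x + t *\<^sub>R y - xb = (1 - t) *\<^sub>R (x - xb) + t *\<^sub>R (y - xb)"
    by (simp add: algebra_simps)
  then show "e * inner u ((1 - t) *\<^sub>R x + t *\<^sub>R y - xb) \<le> (1 - t) * (e * inner u (x - xb)) + t * (e * inner u (y - xb))"
    by (simp add: inner_add_right algebra_simps)
qed

lemma partB:
  fixes F :: "'i::t2_space \<Rightarrow> 'a::euclidean_space \<Rightarrow> real" and xb :: 'a
  assumes cpt: "compact (UNIV :: 'i set)"
    and cvx: "\<And>i. convex_on UNIV (F i)"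
    and cont: "\<And>x. continuous_on UNIV (\<lambda>i. F i x)"
    and f0: "fmax F xb = 0"
    and ii: "\<forall>G :: 'i \<Rightarrow> 'a \<Rightarrow> real.
             continuous_on UNIV (\<lambda>(i, x). G i x)
           \<and> (\<forall>i. convex_on UNIV (G i))
           \<and> fmax G xb = 0
           \<and> (mindir F xb < 0 \<longrightarrow> active G xb \<subseteq> active F xb)
           \<and> (mindir F xb > 0 \<longrightarrow> active F xb \<subseteq> active G xb)
           \<and> (\<forall>i \<in> active F xb \<inter> active G xb.
                 Limsup (at xb) (\<lambda>x. ereal (\<bar>F i x - G i x - (F i xb - G i xb)\<bar> / norm (x - xb)))
                   \<le> ereal \<epsilon>)
           \<longrightarrow> tau_min G xb \<le> ereal c"
    and u: "norm u \<le> 1" and e: "\<epsilon> > 0"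
  shows "tau_min (\<lambda>i x. F i x + \<epsilon> * inner u (x - xb)) xb \<le> ereal c"
proof -
  define G where "G = (\<lambda>i x. F i x + \<epsilon> * inner u (x - xb))"
  have fG: "fmax G x = fmax F x + \<epsilon> * inner u (x - xb)" for x
    unfolding G_def by (rule fmax_shift[OF cpt cont])
  have jc: "continuous_on UNIV (\<lambda>(i, x). F i x)" by (rule joint_cont[OF cpt cont cvx])
  have "continuous_on UNIV (\<lambda>p. (\<lambda>(i, x). F i x) p + \<epsilon> * inner u (snd p - xb))"
    by (intro continuous_intros jc)
  then have c1: "continuous_on UNIV (\<lambda>(i, x). G i x)"
    unfolding G_def by (simp add: case_prod_unfold)
  have c2: "\<forall>i. convex_on UNIV (G i)"
    unfolding G_def using convex_on_add[OF cvx affine_convex] by blast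
  have c3: "fmax G xb = 0" using fG f0 by simp
  have act: "active G xb = active F xb" using c3 f0 unfolding active_def by (simp add: G_def)
  have c4: "Limsup (at xb) (\<lambda>x. ereal (\<bar>F i x - G i x - (F i xb - G i xb)\<bar> / norm (x - xb))) \<le> ereal \<epsilon>" for i
  proof (rule Limsup_bounded, rule always_eventually, intro allI)
    fix x
    have "\<bar>F i x - G i x - (F i xb - G i xb)\<bar> = \<epsilon> * \<bar>inner u (x - xb)\<bar>"
      using e by (simp add: G_def abs_mult)
    also have "\<dots> \<le> \<epsilon> * (norm u * norm (x - xb))"
      using e by (intro mult_left_mono) (auto simp: Cauchy_Schwarz_ineq2)
    also have "\<dots> \<le> \<epsilon> * norm (x - xb)"
      using e u by (intro mult_left_mono) (auto simp: mult_left_le_one_le)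
    finally have "\<bar>F i x - G i x - (F i xb - G i xb)\<bar> / norm (x - xb) \<le> \<epsilon>"
      using e by (cases "x = xb") (auto simp: divide_le_eq mult.commute)
    then show "ereal (\<bar>F i x - G i x - (F i xb - G i xb)\<bar> / norm (x - xb)) \<le> ereal \<epsilon>" by simp
  qed
  have "tau_min G xb \<le> ereal c"
    using ii[rule_format, of G] c1 c2 c3 c4 act by auto
  then show ?thesis unfolding G_def .
qed


lemma partApos:
  fixes F :: "'i::t2_space \<Rightarrow> 'a::euclidean_space \<Rightarrow> real" and xb :: 'a
  assumes cpt: "compact (UNIV :: 'i set)"
    and cvx: "\<And>i. convex_on UNIV (F i)"
    and cont: "\<And>x. continuous_on UNIV (\<lambda>i. F i x)"
    and f0: "fmax F xb = 0"
    and mpos: "mindir F xb > 0"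
  shows "\<exists>c>0. \<exists>\<epsilon>>0. \<forall>G :: 'i \<Rightarrow> 'a \<Rightarrow> real.
             continuous_on UNIV (\<lambda>(i, x). G i x)
           \<and> (\<forall>i. convex_on UNIV (G i))
           \<and> fmax G xb = 0
           \<and> (mindir F xb < 0 \<longrightarrow> active G xb \<subseteq> active F xb)
           \<and> (mindir F xb > 0 \<longrightarrow> active F xb \<subseteq> active G xb)
           \<and> (\<forall>i \<in> active F xb \<inter> active G xb.
                 Limsup (at xb) (\<lambda>x. ereal (\<bar>F i x - G i x - (F i xb - G i xb)\<bar> / norm (x - xb)))
                   \<le> ereal \<epsilon>)
           \<longrightarrow> tau_min G xb \<le> ereal c"
proof -
  define m where "m = mindir F xb"
  have m: "m > 0" using mpos by (simp add: m_def)
  let ?f = "fmax F"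
  have fcvx: "convex_on UNIV ?f" by (rule fmax_convex[OF cpt cont cvx])
  note mp = fmax_convex_cont[OF cpt cont cvx, of xb]
  have claim: "\<exists>i. F i xb = 0 \<and> (\<forall>s>0. (3 * m / 4) * s \<le> F i (xb + s *\<^sub>R h))" if h: "norm h = 1" for h
  proof (rule ccontr)
    assume na: "\<not> ?thesis"
    have act: "\<exists>s>0. F i (xb + s *\<^sub>R h) < (3 * m / 4) * s" if "F i xb = 0" for i
      using na that by (auto simp: not_le)
    have le0: "F i xb \<le> 0" for i using fmax_ge[of F xb, OF cpt cont, of i] f0 by simp
    obtain s0 where s0: "s0 > 0" "\<And>s j. 0 < s \<and> s \<le> s0 \<Longrightarrow> F j (xb + s *\<^sub>R h) \<le> (3 * m / 4) * s"
      using L1[OF cpt cont cvx le0 act] by blast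
    have "?f (xb + s0 *\<^sub>R h) \<le> (3 * m / 4) * s0" using s0 by (intro fmax_le) auto
    then have "dq ?f xb h s0 \<le> 3 * m / 4" using s0(1) f0 by (simp add: dq_def divide_le_eq)
    moreover have "DD ?f xb h \<le> dq ?f xb h s0" by (rule DD_le[OF fcvx s0(1)])
    moreover have "m \<le> DD ?f xb h" using mp(1) h by (simp add: m_def)
    ultimately show False using m by linarith
  qed
  have main: "\<forall>G :: 'i \<Rightarrow> 'a \<Rightarrow> real.
             continuous_on UNIV (\<lambda>(i, x). G i x)
           \<and> (\<forall>i. convex_on UNIV (G i))
           \<and> fmax G xb = 0
           \<and> (mindir F xb < 0 \<longrightarrow> active G xb \<subseteq> active F xb)
           \<and> (mindir F xb > 0 \<longrightarrow> active F xb \<subseteq> active G xb)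
           \<and> (\<forall>i \<in> active F xb \<inter> active G xb.
                 Limsup (at xb) (\<lambda>x. ereal (\<bar>F i x - G i x - (F i xb - G i xb)\<bar> / norm (x - xb)))
                   \<le> ereal (m / 4))
           \<longrightarrow> tau_min G xb \<le> ereal (4 / m)"
  proof (intro allI impI)
    fix G :: "'i \<Rightarrow> 'a \<Rightarrow> real"
    assume hyp: "continuous_on UNIV (\<lambda>(i, x). G i x)
           \<and> (\<forall>i. convex_on UNIV (G i))
           \<and> fmax G xb = 0
           \<and> (mindir F xb < 0 \<longrightarrow> active G xb \<subseteq> active F xb)
           \<and> (mindir F xb > 0 \<longrightarrow> active F xb \<subseteq> active G xb)
           \<and> (\<forall>i \<in> active F xb \<inter> active G xb.
                 Limsup (at xb) (\<lambda>x. ereal (\<bar>F i x - G i x - (F i xb - G i xb)\<bar> / norm (x - xb)))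
                   \<le> ereal (m / 4))"
    have Gjc: "continuous_on UNIV (\<lambda>(i, x). G i x)" using hyp by blast
    have Gcont: "continuous_on UNIV (\<lambda>i. G i x)" for x by (rule cont_slice[OF Gjc])
    have Gcvx: "convex_on UNIV (G i)" for i using hyp by blast
    have g0: "fmax G xb = 0" using hyp by blast
    have incl: "active F xb \<subseteq> active G xb" using hyp mpos by blast
    have ls: "\<And>i. i \<in> active F xb \<inter> active G xb \<Longrightarrow>
                 Limsup (at xb) (\<lambda>x. ereal (\<bar>F i x - G i x - (F i xb - G i xb)\<bar> / norm (x - xb)))
                   \<le> ereal (m / 4)" using hyp by blast
    have grow: "(m / 4) * norm (x - xb) \<le> fmax G x" for x
    proof (cases "x = xb")
      case True then show ?thesis using g0 by simp
    next
      case False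
      define t where "t = norm (x - xb)"
      define h where "h = (1 / t) *\<^sub>R (x - xb)"
      have t: "t > 0" using False by (simp add: t_def)
      have xe: "xb + t *\<^sub>R h = x" using t by (simp add: h_def)
      have h: "norm h = 1" using t by (simp add: h_def t_def)
      obtain i where i: "F i xb = 0" "\<And>s. s > 0 \<Longrightarrow> (3 * m / 4) * s \<le> F i (xb + s *\<^sub>R h)"
        using claim[OF h] by blast
      have iF: "i \<in> active F xb" using i f0 by (simp add: active_def)
      then have iG: "i \<in> active G xb" using incl by blast
      then have Gi0: "G i xb = 0" using g0 by (simp add: active_def)
      obtain d where d: "d > 0" "\<And>y. y \<noteq> xb \<and> dist y xb < d \<Longrightarrow> \<bar>F i y - G i y\<bar> < (m / 2) * norm (y - xb)"
        using limsup_extract[of xb F i G, OF ls[OF IntI[OF iF iG]] i(1) Gi0, of "m / 2"] m by auto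
      define s where "s = min t (d / 2)"
      have s: "s > 0" "s \<le> t" "s < d" using t d by (auto simp: s_def)
      define y where "y = xb + s *\<^sub>R h"
      have ny: "norm (y - xb) = s" using s h by (simp add: y_def)
      have "y \<noteq> xb" using ny s by auto
      moreover have "dist y xb < d" using ny s by (simp add: dist_norm)
      ultimately have "\<bar>F i y - G i y\<bar> < (m / 2) * s" using d(2) ny by metis
      moreover have "(3 * m / 4) * s \<le> F i y" using i(2)[OF s(1)] by (simp add: y_def)
      ultimately have Gy: "(m / 4) * s < G i y" by linarith
      have "G i y \<le> (1 - s / t) * G i xb + (s / t) * G i (xb + t *\<^sub>R h)"
        unfolding y_def by (rule convex_interp[OF Gcvx s(1,2)])
      also have "\<dots> = (s / t) * G i x" using Gi0 xe by simp
      finally have "(m / 4) * s < (s / t) * G i x" using Gy by linarith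
      then have "(m / 4) * s * t < s * G i x" using t by (simp add: field_simps)
      then have "s * ((m / 4) * t) < s * G i x" by (simp add: algebra_simps)
      then have "(m / 4) * t < G i x" using s(1) by (simp add: mult_less_cancel_left_pos)
      also have "G i x \<le> fmax G x" by (rule fmax_ge[of G x, OF cpt Gcont])
      finally show ?thesis by (simp add: t_def)
    qed
    have S: "solset G = {xb}"
    proof
      show "{xb} \<subseteq> solset G"
        using fmax_ge[of G xb, OF cpt Gcont] g0 by (auto simp: solset_def)
      show "solset G \<subseteq> {xb}"
      proof
        fix y assume "y \<in> solset G"
        then have "fmax G y \<le> 0" unfolding solset_def by (intro fmax_le) auto
        then have "(m / 4) * norm (y - xb) \<le> 0" using grow[of y] by linarith
        then have "norm (y - xb) \<le> 0" using m by (simp add: mult_le_0_iff)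
        then show "y \<in> {xb}" by simp
      qed
    qed
    have mem: "ereal (4 / m) \<in> {ereal \<tau> | \<tau>. \<tau> > 0 \<and> (\<exists>\<delta>>0. \<forall>x\<in>cball xb \<delta>.
        edist x (solset G) \<le> ereal (\<tau> * max (fmax G x) 0))}"
    proof -
      have "edist x (solset G) \<le> ereal (4 / m * max (fmax G x) 0)" for x
      proof -
        have "dist x xb = norm (x - xb)" by (simp add: dist_norm)
        also have "\<dots> \<le> (4 / m) * fmax G x" using grow[of x] m by (simp add: field_simps)
        also have "\<dots> \<le> (4 / m) * max (fmax G x) 0" using m by (intro mult_left_mono) auto
        finally show ?thesis unfolding S edist_def by simp
      qed
      then show ?thesis using m by (intro CollectI exI[of _ "4 / m"]) (auto intro!: exI[of _ 1])
    qed
    show "tau_min G xb \<le> ereal (4 / m)" unfolding tau_min_def by (rule Inf_lower[OF mem])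
  qed
  have "4 / m > 0" "m / 4 > 0" using m by auto
  then show ?thesis using main by blast
qed


lemma partAneg:
  fixes F :: "'i::t2_space \<Rightarrow> 'a::euclidean_space \<Rightarrow> real" and xb :: 'a
  assumes cpt: "compact (UNIV :: 'i set)"
    and cvx: "\<And>i. convex_on UNIV (F i)"
    and cont: "\<And>x. continuous_on UNIV (\<lambda>i. F i x)"
    and f0: "fmax F xb = 0"
    and mneg: "mindir F xb < 0"
  shows "\<exists>c>0. \<exists>\<epsilon>>0. \<forall>G :: 'i \<Rightarrow> 'a \<Rightarrow> real.
             continuous_on UNIV (\<lambda>(i, x). G i x)
           \<and> (\<forall>i. convex_on UNIV (G i))
           \<and> fmax G xb = 0
           \<and> (mindir F xb < 0 \<longrightarrow> active G xb \<subseteq> active F xb)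
           \<and> (mindir F xb > 0 \<longrightarrow> active F xb \<subseteq> active G xb)
           \<and> (\<forall>i \<in> active F xb \<inter> active G xb.
                 Limsup (at xb) (\<lambda>x. ereal (\<bar>F i x - G i x - (F i xb - G i xb)\<bar> / norm (x - xb)))
                   \<le> ereal \<epsilon>)
           \<longrightarrow> tau_min G xb \<le> ereal c"
proof -
  define m where "m = mindir F xb"
  have m: "m < 0" using mneg by (simp add: m_def)
  define \<kappa> where "\<kappa> = - m / 8"
  have k: "\<kappa> > 0" using m by (simp add: \<kappa>_def)
  let ?f = "fmax F"
  have fcvx: "convex_on UNIV ?f" by (rule fmax_convex[OF cpt cont cvx])
  note mp = fmax_convex_cont[OF cpt cont cvx, of xb]
  obtain h0 where h0: "norm h0 = 1" "DD ?f xb h0 < m / 2"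
    using mp(2)[of "m / 2"] m by (auto simp: m_def)
  obtain t where t: "t > 0" "\<And>s. 0 < s \<and> s \<le> t \<Longrightarrow> dq ?f xb h0 s < m / 2"
    using DD_less[OF fcvx h0(2)] by blast
  have main: "\<forall>G :: 'i \<Rightarrow> 'a \<Rightarrow> real.
             continuous_on UNIV (\<lambda>(i, x). G i x)
           \<and> (\<forall>i. convex_on UNIV (G i))
           \<and> fmax G xb = 0
           \<and> (mindir F xb < 0 \<longrightarrow> active G xb \<subseteq> active F xb)
           \<and> (mindir F xb > 0 \<longrightarrow> active F xb \<subseteq> active G xb)
           \<and> (\<forall>i \<in> active F xb \<inter> active G xb.
                 Limsup (at xb) (\<lambda>x. ereal (\<bar>F i x - G i x - (F i xb - G i xb)\<bar> / norm (x - xb)))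
                   \<le> ereal (- m / 4))
           \<longrightarrow> tau_min G xb \<le> ereal (2 / \<kappa>)"
  proof (intro allI impI)
    fix G :: "'i \<Rightarrow> 'a \<Rightarrow> real"
    assume hyp: "continuous_on UNIV (\<lambda>(i, x). G i x)
           \<and> (\<forall>i. convex_on UNIV (G i))
           \<and> fmax G xb = 0
           \<and> (mindir F xb < 0 \<longrightarrow> active G xb \<subseteq> active F xb)
           \<and> (mindir F xb > 0 \<longrightarrow> active F xb \<subseteq> active G xb)
           \<and> (\<forall>i \<in> active F xb \<inter> active G xb.
                 Limsup (at xb) (\<lambda>x. ereal (\<bar>F i x - G i x - (F i xb - G i xb)\<bar> / norm (x - xb)))
                   \<le> ereal (- m / 4))"
    have Gjc: "continuous_on UNIV (\<lambda>(i, x). G i x)" using hyp by blast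
    have Gcont: "continuous_on UNIV (\<lambda>i. G i x)" for x by (rule cont_slice[OF Gjc])
    have Gcvx: "convex_on UNIV (G i)" for i using hyp by blast
    have g0: "fmax G xb = 0" using hyp by blast
    have incl: "active G xb \<subseteq> active F xb" using hyp mneg by blast
    have ls: "\<And>i. i \<in> active F xb \<inter> active G xb \<Longrightarrow>
                 Limsup (at xb) (\<lambda>x. ereal (\<bar>F i x - G i x - (F i xb - G i xb)\<bar> / norm (x - xb)))
                   \<le> ereal (- m / 4)" using hyp by blast
    let ?g = "fmax G"
    have gcvx: "convex_on UNIV ?g" by (rule fmax_convex[OF cpt Gcont Gcvx])
    have gc: "continuous_on UNIV ?g" by (rule fmax_cont[OF cpt Gcont Gcvx])
    have Gle0: "G i xb \<le> 0" for i using fmax_ge[of G xb, OF cpt Gcont, of i] g0 by simp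
    have act: "\<exists>s>0. G i (xb + s *\<^sub>R h0) < (m / 8) * s" if Gi0: "G i xb = 0" for i
    proof -
      have iG: "i \<in> active G xb" using Gi0 g0 by (simp add: active_def)
      then have iF: "i \<in> active F xb" using incl by blast
      then have Fi0: "F i xb = 0" using f0 by (simp add: active_def)
      obtain d where d: "d > 0" "\<And>y. y \<noteq> xb \<and> dist y xb < d \<Longrightarrow> \<bar>F i y - G i y\<bar> < (- 3 * m / 8) * norm (y - xb)"
        using limsup_extract[of xb F i G, OF ls[OF IntI[OF iF iG]] Fi0 Gi0, of "- 3 * m / 8"] m by auto
      define s where "s = min t (d / 2)"
      have s: "s > 0" "s \<le> t" "s < d" using t d by (auto simp: s_def)
      define y where "y = xb + s *\<^sub>R h0"
      have ny: "norm (y - xb) = s" using s h0 by (simp add: y_def)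
      have "y \<noteq> xb" using ny s by auto
      moreover have "dist y xb < d" using ny s by (simp add: dist_norm)
      ultimately have "\<bar>F i y - G i y\<bar> < (- 3 * m / 8) * s" using d(2) ny by metis
      moreover have "F i y \<le> ?f y" by (rule fmax_ge[of F y, OF cpt cont])
      moreover have "?f y < (m / 2) * s"
        using t(2)[of s] s f0 by (simp add: dq_def y_def divide_less_eq mult.commute)
      ultimately have "G i y < (m / 8) * s" by linarith
      then show ?thesis using s(1) by (intro exI[of _ s]) (simp add: y_def)
    qed
    obtain s0 where s0: "s0 > 0" "\<And>s j. 0 < s \<and> s \<le> s0 \<Longrightarrow> G j (xb + s *\<^sub>R h0) \<le> (m / 8) * s"
      using L1[OF cpt Gcont Gcvx Gle0 act] by blast
    have gs0: "?g (xb + s0 *\<^sub>R h0) \<le> - \<kappa> * s0"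
      using s0 by (intro fmax_le) (auto simp: \<kappa>_def)
    have gcont_pt: "\<exists>d>0. \<forall>y. dist y z < d \<longrightarrow> \<bar>?g y - ?g z\<bar> < e" if "e > 0" for z e
      using gc that unfolding continuous_on_iff by (auto simp: dist_real_def)
    obtain d1 where d1: "d1 > 0" "\<And>y. dist y (xb + s0 *\<^sub>R h0) < d1 \<Longrightarrow> \<bar>?g y - ?g (xb + s0 *\<^sub>R h0)\<bar> < \<kappa> * s0 / 4"
      using gcont_pt[of "\<kappa> * s0 / 4" "xb + s0 *\<^sub>R h0"] k s0 by auto
    obtain d2 where d2: "d2 > 0" "\<And>y. dist y xb < d2 \<Longrightarrow> \<bar>?g y - ?g xb\<bar> < \<kappa> * s0 / 4"
      using gcont_pt[of "\<kappa> * s0 / 4" xb] k s0 by auto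
    define \<delta>1 where "\<delta>1 = min d1 d2"
    have dl1: "\<delta>1 > 0" using d1 d2 by (simp add: \<delta>1_def)
    obtain d3 where d3: "d3 > 0" "\<And>y. dist y xb < d3 \<Longrightarrow> \<bar>?g y - ?g xb\<bar> < \<kappa> * \<delta>1 / 4"
      using gcont_pt[of "\<kappa> * \<delta>1 / 4" xb] k dl1 by auto
    have psi: "?g (y + s0 *\<^sub>R h0) - ?g y < - \<kappa> * s0 / 2" if y: "dist y xb < \<delta>1" for y
    proof -
      have "dist (y + s0 *\<^sub>R h0) (xb + s0 *\<^sub>R h0) = dist y xb" by (simp add: dist_norm)
      then have "\<bar>?g (y + s0 *\<^sub>R h0) - ?g (xb + s0 *\<^sub>R h0)\<bar> < \<kappa> * s0 / 4"
        using d1(2) y by (simp add: \<delta>1_def)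
      moreover have "\<bar>?g y - ?g xb\<bar> < \<kappa> * s0 / 4" using d2(2) y by (simp add: \<delta>1_def)
      ultimately show ?thesis using gs0 g0 by linarith
    qed
    define \<delta> where "\<delta> = min (\<delta>1 / 2) (d3 / 2)"
    have dl: "\<delta> > 0" using dl1 d3 by (simp add: \<delta>_def)
    have xbS: "xb \<in> solset G" using Gle0 by (simp add: solset_def)
    have Sne: "solset G \<noteq> {}" using xbS by auto
    have eb: "infdist x (solset G) \<le> (2 / \<kappa>) * max (?g x) 0" if x: "x \<in> cball xb \<delta>" for x
    proof (cases "?g x \<le> 0")
      case True
      then have "x \<in> solset G"
        using fmax_ge[of G x, OF cpt Gcont] by (auto simp: solset_def intro: order.trans)
      then show ?thesis using k by simp
    next
      case False
      then have gx: "?g x > 0" by simp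
      have dx: "dist x xb \<le> \<delta>" using x by (simp add: dist_commute)
      have "\<bar>?g x - ?g xb\<bar> < \<kappa> * \<delta>1 / 4" using d3(2) dx dl by (simp add: \<delta>_def)
      then have gxs: "?g x < \<kappa> * \<delta>1 / 4" using g0 by simp
      define T where "T = 2 * ?g x / \<kappa>"
      have T: "T > 0" using gx k by (simp add: T_def)
      have Tk: "T * \<kappa> = 2 * ?g x" using k by (simp add: T_def)
      have Tlt: "T < \<delta>1 / 2"
      proof -
        have "T * \<kappa> < (\<delta>1 / 2) * \<kappa>" using Tk gxs by (simp add: field_simps)
        then show ?thesis using k by simp
      qed
      define y where "y = x + T *\<^sub>R h0"
      have "dist y xb \<le> dist y x + dist x xb" by (rule dist_triangle)
      also have "dist y x = T" using h0 T by (simp add: y_def dist_norm)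
      finally have "dist y xb < \<delta>1" using Tlt dx by (simp add: \<delta>_def)
      then have ps: "?g (y + s0 *\<^sub>R h0) - ?g y < - \<kappa> * s0 / 2" by (rule psi)
      have "?g y \<le> (1 - T / (T + s0)) * ?g x + (T / (T + s0)) * ?g (x + (T + s0) *\<^sub>R h0)"
        unfolding y_def by (rule convex_interp[OF gcvx T]) (use s0 in simp)
      moreover have "x + (T + s0) *\<^sub>R h0 = y + s0 *\<^sub>R h0" by (simp add: y_def algebra_simps)
      ultimately have ineq: "?g y \<le> (1 - T / (T + s0)) * ?g x + (T / (T + s0)) * ?g (y + s0 *\<^sub>R h0)" by simp
      have Ts: "T + s0 > 0" using T s0 by simp
      have "(T + s0) * ?g y \<le> (T + s0) * ((1 - T / (T + s0)) * ?g x + (T / (T + s0)) * ?g (y + s0 *\<^sub>R h0))"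
        using ineq Ts by (intro mult_left_mono) auto
      also have "\<dots> = ((T + s0) * (1 - T / (T + s0))) * ?g x + ((T + s0) * (T / (T + s0))) * ?g (y + s0 *\<^sub>R h0)"
        by (simp add: algebra_simps)
      also have "(T + s0) * (1 - T / (T + s0)) = s0" using Ts by (simp add: field_simps)
      also have "(T + s0) * (T / (T + s0)) = T" using Ts by simp
      finally have A: "(T + s0) * ?g y \<le> s0 * ?g x + T * ?g (y + s0 *\<^sub>R h0)" .
      have B: "T * ?g (y + s0 *\<^sub>R h0) \<le> T * (?g y - \<kappa> * s0 / 2)"
        using ps T by (intro mult_left_mono) auto
      have C: "T * (\<kappa> * s0 / 2) = s0 * ?g x" using Tk by (simp add: algebra_simps)
      have B': "T * ?g (y + s0 *\<^sub>R h0) \<le> T * ?g y - s0 * ?g x"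
      proof -
        have "T * (?g y - \<kappa> * s0 / 2) = T * ?g y - T * (\<kappa> * s0 / 2)" by (rule right_diff_distrib)
        then show ?thesis using B C by linarith
      qed
      have "(T + s0) * ?g y = T * ?g y + s0 * ?g y" by (simp add: distrib_right)
      then have "s0 * ?g y \<le> 0" using A B' by linarith
      then have gy: "?g y \<le> 0" using s0 by (simp add: mult_le_0_iff)
      then have yS: "y \<in> solset G"
        using fmax_ge[of G y, OF cpt Gcont] by (auto simp: solset_def intro: order.trans)
      have "infdist x (solset G) \<le> dist x y" by (rule infdist_le[OF yS])
      also have "dist x y = T" using h0 T by (simp add: y_def dist_norm)
      also have "T = (2 / \<kappa>) * max (?g x) 0" using gx by (simp add: T_def)
      finally show ?thesis .
    qed
    have mem: "ereal (2 / \<kappa>) \<in> {ereal \<tau> | \<tau>. \<tau> > 0 \<and> (\<exists>\<delta>>0. \<forall>x\<in>cball xb \<delta>.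
        edist x (solset G) \<le> ereal (\<tau> * max (fmax G x) 0))}"
      using eb Sne k dl unfolding edist_def by (intro CollectI exI[of _ "2 / \<kappa>"]) auto
    show "tau_min G xb \<le> ereal (2 / \<kappa>)" unfolding tau_min_def by (rule Inf_lower[OF mem])
  qed
  have "2 / \<kappa> > 0" "- m / 4 > 0" using m k by auto
  then show ?thesis using main by blast
qed

theorem theorem12:
  fixes F :: "'i::t2_space \<Rightarrow> 'a::euclidean_space \<Rightarrow> real" and xb :: 'a
  assumes "compact (UNIV :: 'i set)"
    and "\<And>i. convex_on UNIV (F i)"
    and "\<And>x. continuous_on UNIV (\<lambda>i. F i x)"
    and "fmax F xb = 0"
  shows "(mindir F xb \<noteq> 0
      \<longleftrightarrow> (\<exists>c>0. \<exists>\<epsilon>>0. \<forall>G :: 'i \<Rightarrow> 'a \<Rightarrow> real.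
             continuous_on UNIV (\<lambda>(i, x). G i x)
           \<and> (\<forall>i. convex_on UNIV (G i))
           \<and> fmax G xb = 0
           \<and> (mindir F xb < 0 \<longrightarrow> active G xb \<subseteq> active F xb)
           \<and> (mindir F xb > 0 \<longrightarrow> active F xb \<subseteq> active G xb)
           \<and> (\<forall>i \<in> active F xb \<inter> active G xb.
                 Limsup (at xb) (\<lambda>x. ereal (\<bar>F i x - G i x - (F i xb - G i xb)\<bar> / norm (x - xb)))
                   \<le> ereal \<epsilon>)
           \<longrightarrow> tau_min G xb \<le> ereal c))
    \<and> (mindir F xb \<noteq> 0
      \<longleftrightarrow> (\<exists>c>0. \<exists>\<epsilon>>0. \<forall>u :: 'a. norm u \<le> 1 \<longrightarrow>
             tau_min (\<lambda>i x. F i x + \<epsilon> * inner u (x - xb)) xb \<le> ereal c))"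
  (is "(?A \<longleftrightarrow> ?B) \<and> (?A \<longleftrightarrow> ?C)")
proof -
  note asm = assms(1) assms(2) assms(3) assms(4)
  have AB: "?B" if "?A"
  proof (cases "mindir F xb < 0")
    case True then show ?thesis using partAneg[OF asm] by blast
  next
    case False then have "mindir F xb > 0" using that by simp
    then show ?thesis using partApos[OF asm] by blast
  qed
  have BC: "?C" if "?B"
  proof -
    from that obtain c \<epsilon> where ce: "c > 0" "\<epsilon> > 0" and ii: "\<forall>G :: 'i \<Rightarrow> 'a \<Rightarrow> real.
             continuous_on UNIV (\<lambda>(i, x). G i x)
           \<and> (\<forall>i. convex_on UNIV (G i))
           \<and> fmax G xb = 0
           \<and> (mindir F xb < 0 \<longrightarrow> active G xb \<subseteq> active F xb)
           \<and> (mindir F xb > 0 \<longrightarrow> active F xb \<subseteq> active G xb)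
           \<and> (\<forall>i \<in> active F xb \<inter> active G xb.
                 Limsup (at xb) (\<lambda>x. ereal (\<bar>F i x - G i x - (F i xb - G i xb)\<bar> / norm (x - xb)))
                   \<le> ereal \<epsilon>)
           \<longrightarrow> tau_min G xb \<le> ereal c" by blast
    have "\<forall>u :: 'a. norm u \<le> 1 \<longrightarrow> tau_min (\<lambda>i x. F i x + \<epsilon> * inner u (x - xb)) xb \<le> ereal c"
      using partB[OF asm ii _ ce(2)] by blast
    then show ?thesis using ce by blast
  qed
  have CA: "?A" if "?C"
  proof (rule ccontr)
    assume "\<not> ?A"
    then have m0: "mindir F xb = 0" by simp
    from that obtain c \<epsilon> where ce: "c > 0" "\<epsilon> > 0" and iii:
      "\<forall>u :: 'a. norm u \<le> 1 \<longrightarrow> tau_min (\<lambda>i x. F i x + \<epsilon> * inner u (x - xb)) xb \<le> ereal c" by blast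
    obtain u :: 'a where "norm u \<le> 1" "\<not> tau_min (\<lambda>i x. F i x + \<epsilon> * inner u (x - xb)) xb \<le> ereal c"
      using partC[OF asm m0 ce] by blast
    then show False using iii by blast
  qed
  show ?thesis using AB BC CA by blast
qed

end
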